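(* Let $q$ be a positive integer and $\varepsilon\in(0,1]$ such that $q^\varepsilon$ is an integer. Then there is a function $g:\mathbb N\to\mathbb R$ with $g(n)=o(n)$ such that for every positive integer $n$, the tensor $\langle q,q^\varepsilon,q\rangle^{\otimes n}$ has a zeroing out which is an independent tensor with at least $q^{(1+\varepsilon)n-g(n)}$ nonzero coefficients.
   Context: A tensor over finite sets of formal variables $X,Y,Z$ is a trilinear form $\sum T_{xyz}\,xyz$ with field coefficients. $\langle n,m,k\rangle=\sum_{i=1}^n\sum_{j=1}^m\sum_{l=1}^k x_{ij}y_{jl}z_{li}$. $A^{\otimes n}$ denotes the $n$-fold tensor power: the tensor over $X^n,Y^n,Z^n$ whose coefficient on $(x^{(1)},\dots,x^{(n)})(y^{(1)},\dots,y^{(n)})(z^{(1)},\dots,z^{(n)})$ is $\prod_t A_{x^{(t)}y^{(t)}z^{(t)}}$. For tensors $A,B$ over $X,Y,Z$, $A$ is a zeroing out of $B$ if each $A_{xyz}\in\{B_{xyz},0\}$ and there are functions $a:X\to\mathbb Z_{\ge0}$, $b:Y\to\mathbb Z_{\ge0}$, $c:Z\to\mathbb Z_{\ge0}$ such that whenever $B_{xyz}\ne0$, $A_{xyz}\ne 0$ iff $a(x)+b(y)+c(z)=0$. A tensor is independent if any two distinct triples $(x,y,z),(x',y',z')$ with nonzero coefficients satisfy $x\ne x'$, $y\ne y'$ and $z\ne z'$. *)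

theory Defs
  imports Complex_Main "HOL-Library.Landau_Symbols"
begin

text \<open>A tensor over variable types 'x, 'y, 'z with coefficients in a field 'f is a
function giving the coefficient of each monomial x y z (zero outside its support).\<close>

type_synonym ('x, 'y, 'z, 'f) tensor = "'x \<Rightarrow> 'y \<Rightarrow> 'z \<Rightarrow> 'f"

text \<open>Matrix multiplication tensor <n,m,k> = sum over i<n, j<m, l<k of
x_(i,j) y_(j,l) z_(l,i).\<close>
definition mm_tensor :: "nat \<Rightarrow> nat \<Rightarrow> nat \<Rightarrow> (nat \<times> nat, nat \<times> nat, nat \<times> nat, 'f::field) tensor" where
  "mm_tensor n m k = (\<lambda>(i, j) (j', l) (l', i').
      if i < n \<and> j < m \<and> l < k \<and> j' = j \<and> l' = l \<and> i' = i then 1 else 0)"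

definition tensor_pow :: "('x, 'y, 'z, 'f::field) tensor \<Rightarrow> nat \<Rightarrow> ('x list, 'y list, 'z list, 'f) tensor" where
  "tensor_pow T n = (\<lambda>xs ys zs.
      if length xs = n \<and> length ys = n \<and> length zs = n
      then (\<Prod>t<n. T (xs ! t) (ys ! t) (zs ! t)) else 0)"

definition zeroing_out :: "('x, 'y, 'z, 'f::field) tensor \<Rightarrow> ('x, 'y, 'z, 'f) tensor \<Rightarrow> bool" where
  "zeroing_out A B \<longleftrightarrow>
     (\<forall>x y z. A x y z = B x y z \<or> A x y z = 0) \<and>
     (\<exists>a :: 'x \<Rightarrow> nat. \<exists>b :: 'y \<Rightarrow> nat. \<exists>c :: 'z \<Rightarrow> nat.
        \<forall>x y z. B x y z \<noteq> 0 \<longrightarrow> (A x y z \<noteq> 0 \<longleftrightarrow> a x + b y + c z = 0))"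

definition tensor_support :: "('x, 'y, 'z, 'f::field) tensor \<Rightarrow> ('x \<times> 'y \<times> 'z) set" where
  "tensor_support A = {(x, y, z). A x y z \<noteq> 0}"

definition independent_tensor :: "('x, 'y, 'z, 'f::field) tensor \<Rightarrow> bool" where
  "independent_tensor A \<longleftrightarrow>
     (\<forall>x y z x' y' z'. (x, y, z) \<in> tensor_support A \<longrightarrow> (x', y', z') \<in> tensor_support A \<longrightarrow>
        (x, y, z) \<noteq> (x', y', z') \<longrightarrow> x \<noteq> x' \<and> y \<noteq> y' \<and> z \<noteq> z')"

end

theory Submission
  imports Defs "HOL-Library.FuncSet"
begin

definition ap3free :: "nat set \<Rightarrow> bool" where
  "ap3free B \<longleftrightarrow> (\<forall>a\<in>B. \<forall>b\<in>B. \<forall>c\<in>B. a + b = 2*c \<longrightarrow> a = b)"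

definition enc :: "nat \<Rightarrow> nat \<Rightarrow> (nat \<Rightarrow> nat) \<Rightarrow> nat" where
  "enc D k f = (\<Sum>t<k. f t * D^t)"

lemma enc_Suc: "enc D (Suc k) f = f 0 + D * enc D k (\<lambda>t. f (Suc t))"
  unfolding enc_def by (subst sum.lessThan_Suc_shift) (simp add: sum_distrib_left mult.assoc mult.left_commute del: sum.lessThan_Suc)

lemma nocarry:
  assumes "D > 0" "\<forall>t<k. x t + y t < D" "\<forall>t<k. z t + w t < D"
    "enc D k x + enc D k y = enc D k z + enc D k w"
  shows "\<forall>t<k. x t + y t = z t + w t"
  using assms
proof (induction k arbitrary: x y z w)
  case 0 then show ?case by simp
next
  case (Suc k)
  have e: "(x 0 + y 0) + D * (enc D k (\<lambda>t. x (Suc t)) + enc D k (\<lambda>t. y (Suc t)))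
     = (z 0 + w 0) + D * (enc D k (\<lambda>t. z (Suc t)) + enc D k (\<lambda>t. w (Suc t)))"
    using Suc.prems(4) unfolding enc_Suc by (simp add: algebra_simps)
  have l1: "x 0 + y 0 < D" "z 0 + w 0 < D" using Suc.prems by auto
  have "(x 0 + y 0) mod D = (z 0 + w 0) mod D" using arg_cong[OF e, of "\<lambda>a. a mod D"] by simp
  hence h0: "x 0 + y 0 = z 0 + w 0" using l1 by simp
  hence "enc D k (\<lambda>t. x (Suc t)) + enc D k (\<lambda>t. y (Suc t)) = enc D k (\<lambda>t. z (Suc t)) + enc D k (\<lambda>t. w (Suc t))"
    using e Suc.prems(1) by simp
  hence ih: "\<forall>t<k. x (Suc t) + y (Suc t) = z (Suc t) + w (Suc t)"
    using Suc.IH[of "\<lambda>t. x (Suc t)" "\<lambda>t. y (Suc t)" "\<lambda>t. z (Suc t)" "\<lambda>t. w (Suc t)"] Suc.prems by auto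
  show ?case
  proof (intro allI impI)
    fix t assume "t < Suc k"
    then show "x t + y t = z t + w t" using h0 ih by (cases t) auto
  qed
qed

lemma enc_less: "D > 0 \<Longrightarrow> \<forall>t<k. f t < D \<Longrightarrow> enc D k f < D^k"
proof (induction k)
  case 0 then show ?case by (simp add: enc_def)
next
  case (Suc k)
  have a: "enc D k f + 1 \<le> D^k" using Suc by auto
  have b: "f k + 1 \<le> D" using Suc.prems by auto
  have "enc D (Suc k) f = enc D k f + f k * D^k" by (simp add: enc_def)
  also have "\<dots> + 1 \<le> D^k + f k * D^k" using a by simp
  also have "\<dots> = (f k + 1) * D^k" by (simp add: algebra_simps)
  also have "\<dots> \<le> D * D^k" using b by (intro mult_right_mono) auto
  finally show ?case by simp
qed

definition Sph :: "nat \<Rightarrow> nat \<Rightarrow> nat \<Rightarrow> (nat \<Rightarrow> nat) set" where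
  "Sph k d r = {f \<in> PiE {..<k} (\<lambda>_. {..<d}). (\<Sum>t<k. (f t)^2) = r}"

lemma sph_ap3free:
  assumes "d > 0"
  shows "ap3free (enc (2*d) k ` Sph k d r)"
  unfolding ap3free_def
proof (intro ballI impI)
  fix a b c assume "a \<in> enc (2*d) k ` Sph k d r" "b \<in> enc (2*d) k ` Sph k d r"
    "c \<in> enc (2*d) k ` Sph k d r" and abc: "a + b = 2*c"
  then obtain x y z where x: "x \<in> Sph k d r" "a = enc (2*d) k x"
    and y: "y \<in> Sph k d r" "b = enc (2*d) k y" and z: "z \<in> Sph k d r" "c = enc (2*d) k z" by blast
  have dx: "\<forall>t<k. x t < d" "\<forall>t<k. y t < d" "\<forall>t<k. z t < d"
    using x y z unfolding Sph_def by (auto simp: PiE_def Pi_def)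
  have "\<forall>t<k. x t + y t = z t + z t"
    proof (rule nocarry[of "2*d" k x y z z])
    show "\<forall>t<k. x t + y t < 2 * d"
    proof (intro allI impI)
      fix t assume "t < k" then have "x t < d" "y t < d" using dx by auto
      then show "x t + y t < 2 * d" by linarith
    qed
    show "\<forall>t<k. z t + z t < 2 * d"
    proof (intro allI impI)
      fix t assume "t < k" then have "z t < d" using dx by auto
      then show "z t + z t < 2 * d" by linarith
    qed
  qed (use assms abc x y z in auto)
  hence xyz: "\<forall>t<k. int (x t) + int (y t) = 2 * int (z t)" by auto
  have sx: "(\<Sum>t<k. int (x t)^2) = int r" "(\<Sum>t<k. int (y t)^2) = int r" "(\<Sum>t<k. int (z t)^2) = int r"
    using x y z unfolding Sph_def by (auto simp flip: of_nat_power of_nat_sum)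
  have "(\<Sum>t<k. (int (x t) - int (y t))^2) = (\<Sum>t<k. 2*int (x t)^2 + 2*int (y t)^2 - 4 * int (z t)^2)"
  proof (rule sum.cong)
    fix t assume "t \<in> {..<k}"
    then have "int (x t) + int (y t) = 2 * int (z t)" using xyz by auto
    then have "4 * int (z t)^2 = (int (x t) + int (y t))^2" by (simp add: power2_eq_square)
    then show "(int (x t) - int (y t))^2 = 2*int (x t)^2 + 2*int (y t)^2 - 4 * int (z t)^2"
      by (simp add: power2_eq_square algebra_simps)
  qed simp
  also have "\<dots> = 2*(\<Sum>t<k. int (x t)^2) + 2*(\<Sum>t<k. int (y t)^2) - 4 * (\<Sum>t<k. int (z t)^2)"
    by (simp add: sum_subtractf sum.distrib sum_distrib_left)
  also have "\<dots> = 0" using sx by simp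
  finally have "(\<Sum>t<k. (int (x t) - int (y t))^2) = 0" .
  hence "\<forall>t\<in>{..<k}. (int (x t) - int (y t))^2 = 0"
    by (subst (asm) sum_nonneg_eq_0_iff) auto
  hence "\<forall>t<k. x t = y t" by auto
  moreover have "x \<in> PiE {..<k} (\<lambda>_. {..<d})" "y \<in> PiE {..<k} (\<lambda>_. {..<d})" using x y unfolding Sph_def by auto
  ultimately have "x = y" by (intro PiE_ext) auto
  then show "a = b" using x y by simp
qed

lemma enc_inj:
  assumes "d > 0"
  shows "inj_on (enc (2*d) k) (PiE {..<k} (\<lambda>_. {..<d}))"
proof (rule inj_onI)
  fix x y assume x: "x \<in> PiE {..<k} (\<lambda>_. {..<d})" and y: "y \<in> PiE {..<k} (\<lambda>_. {..<d})"
    and e: "enc (2 * d) k x = enc (2 * d) k y"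
  have "\<forall>t<k. x t + 0 = y t + 0"
    by (rule nocarry[of "2*d" k x "\<lambda>_. 0" y "\<lambda>_. 0"]) (use assms x y e in \<open>auto simp: enc_def PiE_def Pi_def\<close>)
  then show "x = y" using x y by (intro PiE_ext) auto
qed

lemma pigeon:
  assumes "d > 0"
  shows "\<exists>r. d^k \<le> card (Sph k d r) * (k*d^2+1)"
proof -
  let ?P = "PiE {..<k} (\<lambda>_::nat. {..<d})"
  let ?I = "{..k*d^2}"
  have cP: "card ?P = d^k" by (simp add: card_PiE)
  have sub: "?P \<subseteq> (\<Union>r\<in>?I. Sph k d r)"
  proof
    fix f assume f: "f \<in> ?P"
    have "(\<Sum>t<k. (f t)^2) \<le> (\<Sum>t<k. d^2)"
    proof (rule sum_mono)
      fix t assume "t \<in> {..<k}" then have "f t < d" using f by (auto simp: PiE_def Pi_def)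
      then show "(f t)^2 \<le> d^2" by (intro power_mono) auto
    qed
    then have "(\<Sum>t<k. (f t)^2) \<in> ?I" by simp
    then show "f \<in> (\<Union>r\<in>?I. Sph k d r)" using f unfolding Sph_def by blast
  qed
  have fin: "finite (Sph k d r)" for r unfolding Sph_def by (rule finite_subset[of _ ?P]) (auto intro: finite_PiE)
  define m0 where "m0 = Max ((\<lambda>r. card (Sph k d r)) ` ?I)"
  have "m0 \<in> (\<lambda>r. card (Sph k d r)) ` ?I" unfolding m0_def by (intro Max_in) auto
  then obtain r0 where r0: "m0 = card (Sph k d r0)" by auto
  have le: "card (Sph k d r) \<le> m0" if "r \<in> ?I" for r unfolding m0_def using that by (intro Max_ge) auto
  have "d^k \<le> card (\<Union>r\<in>?I. Sph k d r)" unfolding cP[symmetric]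
    by (rule card_mono) (use sub fin in auto)
  also have "\<dots> \<le> (\<Sum>r\<in>?I. card (Sph k d r))" by (rule card_UN_le) simp
  also have "\<dots> \<le> card ?I * m0" using sum_bounded_above[of ?I "\<lambda>r. card (Sph k d r)" m0] le by simp
  finally show ?thesis using r0 by (auto simp: mult.commute)
qed

lemma behrend_k:
  assumes k: "k \<ge> 2" and K: "K \<ge> 1"
  shows "\<exists>B \<subseteq> {..<K}. ap3free B \<and> real K powr ((real k - 2)/real k) \<le> real (card B) * (k+1) * 4^k"
proof (cases "K < 2^k")
  case True
  have "ap3free {0}" unfolding ap3free_def by auto
  moreover have "real K powr ((real k - 2)/real k) \<le> real K powr 1"
    using K k by (intro powr_mono) (auto simp: divide_le_eq)
  moreover have "real K powr 1 = real K" by simp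
  moreover have "real K < 2^k" using True by (metis of_nat_less_iff of_nat_numeral of_nat_power)
  moreover have "(2::real)^k \<le> 4^k" by (intro power_mono) auto
  moreover have "(4::real)^k \<le> (real k+1) * 4^k" by simp
  ultimately have "real K powr ((real k - 2)/real k) \<le> (real k+1) * 4^k" by linarith
  then have "real K powr ((real k - 2)/real k) \<le> real (card {0::nat}) * (real k+1) * 4^k" by simp
  then show ?thesis using K \<open>ap3free {0}\<close> by (intro exI[of _ "{0}"]) (auto simp: add.commute)
next
  case False
  define P where "P = (\<lambda>d. (2*d)^k \<le> K)"
  have bnd: "d \<le> K" if "P d" for d
  proof -
    have "d \<le> (2*d)^1" by simp
    also have "\<dots> \<le> (2*d)^k"
    proof (cases "d = 0")
      case False then show ?thesis using k by (intro power_increasing) auto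
    qed simp
    finally show ?thesis using that P_def by simp
  qed
  define d where "d = (GREATEST d. P d)"
  have P1: "P 1" using False unfolding P_def by simp
  have Pd: "P d" unfolding d_def by (rule GreatestI_nat[where P=P, OF P1]) (use bnd in auto)
  have d1: "d \<ge> 1" unfolding d_def by (rule Greatest_le_nat[where P=P, OF P1]) (use bnd in auto)
  have nP: "\<not> P (Suc d)"
  proof
    assume "P (Suc d)" then have "Suc d \<le> d" unfolding d_def by (rule Greatest_le_nat[where P=P]) (use bnd in auto)
    then show False by simp
  qed
  have Klt: "K < (4*d)^k"
  proof -
    have "K < (2*Suc d)^k" using nP unfolding P_def by simp
    also have "\<dots> \<le> (4*d)^k" using d1 by (intro power_mono) auto
    finally show ?thesis .
  qed
  obtain r where r: "d^k \<le> card (Sph k d r) * (k*d^2+1)" using pigeon[of d k] d1 by (auto simp del: One_nat_def)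
  define B where "B = enc (2*d) k ` Sph k d r"
  have cB: "card B = card (Sph k d r)" unfolding B_def
    by (rule card_image, rule inj_on_subset[OF enc_inj]) (use d1 in \<open>auto simp: Sph_def\<close>)
  have BK: "B \<subseteq> {..<K}"
  proof
    fix b assume "b \<in> B"
    then obtain f where f: "f \<in> Sph k d r" "b = enc (2*d) k f" unfolding B_def by auto
    have "\<forall>t<k. f t < 2*d" using f(1) unfolding Sph_def by (force simp: PiE_def Pi_def)
    then have "b < (2*d)^k" using f d1 enc_less[of "2*d" k f] by simp
    then show "b \<in> {..<K}" using Pd P_def by simp
  qed
  have ap: "ap3free B" unfolding B_def using sph_ap3free d1 by simp
  have i1: "real d ^ k \<le> real (card B) * (real k + 1) * real d ^ 2"
  proof -
    have "real (d^k) \<le> real (card B * (k*d^2+1))" using r cB by (simp only: of_nat_le_iff)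
    also have "\<dots> = real (card B) * (real k * real d ^ 2 + 1)" by (simp add: algebra_simps)
    also have "\<dots> \<le> real (card B) * ((real k + 1) * real d ^ 2)"
      using d1 by (intro mult_left_mono) (auto simp: algebra_simps intro!: one_le_power)
    finally show ?thesis by (simp add: algebra_simps)
  qed
  have i2: "real d ^ (k-2) \<le> real (card B) * (real k + 1)"
  proof -
    have "real d ^ (k-2) * real d ^ 2 = real d ^ k" using k by (simp only: power_add[symmetric] le_add_diff_inverse2)
    then have "real d ^ (k-2) * real d ^ 2 \<le> (real (card B) * (real k + 1)) * real d ^ 2" using i1 by simp
    then show ?thesis using d1 by (simp add: mult_le_cancel_right)
  qed
  have "real K powr ((real k - 2)/real k) \<le> (real ((4*d)^k)) powr ((real k - 2)/real k)"
  proof (rule powr_mono2)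
    show "real K \<le> real ((4*d)^k)" using Klt by linarith
  qed (use k in auto)
  also have "\<dots> = real (4*d) powr (real k * ((real k - 2)/real k))"
  proof -
    have "real ((4*d)^k) = real (4*d) powr real k" using d1 by (simp add: powr_realpow)
    then show ?thesis by (simp only: powr_powr)
  qed
  also have "\<dots> = real (4*d) powr (real (k-2))" using k by (simp add: of_nat_diff)
  also have "\<dots> = (4 * real d) ^ (k-2)" using d1 by (simp add: powr_realpow)
  also have "\<dots> = 4^(k-2) * real d ^ (k-2)" by (simp add: power_mult_distrib)
  also have "\<dots> \<le> 4^k * (real (card B) * (real k + 1))"
    by (intro mult_mono i2) (auto intro: power_increasing)
  finally show ?thesis using ap BK by (intro exI[of _ B]) (auto simp: algebra_simps)
qed

lemma behrend_delta:
  assumes "\<delta> > 0"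
  shows "\<exists>K0. \<forall>K\<ge>K0. \<exists>B \<subseteq> {..<K}. ap3free B \<and> real K powr (1-\<delta>) \<le> real (card B)"
proof -
  define k where "k = nat \<lceil>4/\<delta>\<rceil> + 2"
  have k2: "k \<ge> 2" unfolding k_def by simp
  have kd: "real k \<ge> 4/\<delta>" unfolding k_def by linarith
  have kpos: "real k > 0" using k2 by simp
  have ex: "1 - \<delta>/2 \<le> (real k - 2)/real k"
  proof -
    have "2/real k \<le> \<delta>/2" using kd assms kpos by (simp add: field_simps)
    then show ?thesis using kpos by (simp add: diff_divide_distrib)
  qed
  define C where "C = (real k + 1) * 4^k"
  have C1: "C \<ge> 1" proof -
    have "(1::real) \<le> 4^k" by (rule one_le_power) simp
    moreover have "4^k \<le> (real k + 1) * 4^k" by simp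
    ultimately show ?thesis unfolding C_def by linarith
  qed
  define K0 where "K0 = nat \<lceil>C powr (2/\<delta>)\<rceil> + 1"
  show ?thesis
  proof (rule exI, intro allI impI)
    fix K assume KK: "K0 \<le> K"
    then have K1: "K \<ge> 1" unfolding K0_def by simp
    have "real K \<ge> C powr (2/\<delta>)" using KK unfolding K0_def by linarith
    then have "real K powr (\<delta>/2) \<ge> (C powr (2/\<delta>)) powr (\<delta>/2)"
      using assms by (intro powr_mono2) auto
    also have "(C powr (2/\<delta>)) powr (\<delta>/2) = C" using assms C1 by (simp add: powr_powr)
    finally have CK: "C \<le> real K powr (\<delta>/2)" .
    obtain B where B: "B \<subseteq> {..<K}" "ap3free B" "real K powr ((real k - 2)/real k) \<le> real (card B) * (k+1) * 4^k"
      using behrend_k[OF k2 K1] by auto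
    have "real K powr (1-\<delta>) * C \<le> real K powr (1-\<delta>) * real K powr (\<delta>/2)"
      using CK by (intro mult_left_mono) auto
    also have "\<dots> = real K powr (1 - \<delta>/2)" using K1 by (simp add: powr_add[symmetric])
    also have "\<dots> \<le> real K powr ((real k - 2)/real k)" using K1 ex by (intro powr_mono) auto
    also have "\<dots> \<le> real (card B) * C" using B(3) unfolding C_def by (simp add: mult.assoc add.commute)
    finally have X: "real K powr (1-\<delta>) * C \<le> real (card B) * C" .
    have "real K powr (1-\<delta>) \<le> real (card B)" using X C1 by (simp add: mult_le_cancel_right)
    then show "\<exists>B \<subseteq> {..<K}. ap3free B \<and> real K powr (1-\<delta>) \<le> real (card B)" using B by auto
  qed
qed

definition induced :: "('a \<times> 'b \<times> 'c) set \<Rightarrow> bool" where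
  "induced S \<longleftrightarrow>
    (\<forall>I J L I' J' L'. (I,J,L) \<in> S \<longrightarrow> (I',J',L') \<in> S \<longrightarrow>
       ((I = I' \<and> J = J') \<or> (J = J' \<and> L = L') \<or> (L = L' \<and> I = I')) \<longrightarrow> (I = I' \<and> J = J' \<and> L = L')) \<and>
    (\<forall>I J L L1 I2 J3. (I,J,L1) \<in> S \<longrightarrow> (I2,J,L) \<in> S \<longrightarrow> (I,J3,L) \<in> S \<longrightarrow> (I,J,L) \<in> S)"

lemma divmod_uniq:
  fixes c u u' a a' :: nat
  assumes "a < c" "a' < c" "c*u + a = c*u' + a'"
  shows "u = u' \<and> a = a'"
proof -
  have nl: "\<not> u < u'" if "a < c" "c*u + a = c*u' + a'" for u u' a a'
  proof
    assume "u < u'"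
    then have "c*(u+1) \<le> c*u'" by (intro mult_le_mono2) simp
    then show False using that by (simp add: algebra_simps)
  qed
  then have "\<not> u < u'" "\<not> u' < u" using assms nl[of a u u' a'] nl[of a' u' u a] by auto
  then have "u = u'" by simp
  then show ?thesis using assms by simp
qed

definition trip :: "nat \<Rightarrow> nat \<times> nat \<times> nat \<Rightarrow> nat \<times> nat \<times> nat" where
  "trip K = (\<lambda>(u,v,b). (3*K*u+v, v+b, 3*K*u+v+2*b))"

lemma int_construction:
  assumes B: "B \<subseteq> {..<K}" "ap3free B" and UK: "3*K*U \<le> N" and KM: "2*K \<le> M"
  shows "\<exists>S. S \<subseteq> {..<N} \<times> {..<M} \<times> {..<N} \<and> induced S \<and> card S = U*K*card B"
proof -
  define T where "T = {..<U} \<times> {..<K} \<times> B"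
  define S where "S = trip K ` T"
  have mem: "(I,J,L) \<in> S \<longleftrightarrow> (\<exists>u v b. u < U \<and> v < K \<and> b \<in> B \<and> I = 3*K*u+v \<and> J = v+b \<and> L = 3*K*u+v+2*b)" for I J L
  proof
    assume "(I,J,L) \<in> S"
    then obtain u v b where "(u,v,b) \<in> T" "(I,J,L) = trip K (u,v,b)" unfolding S_def by auto
    then show "\<exists>u v b. u < U \<and> v < K \<and> b \<in> B \<and> I = 3*K*u+v \<and> J = v+b \<and> L = 3*K*u+v+2*b"
      unfolding T_def trip_def by auto
  next
    assume "\<exists>u v b. u < U \<and> v < K \<and> b \<in> B \<and> I = 3*K*u+v \<and> J = v+b \<and> L = 3*K*u+v+2*b"
    then obtain u v b where "u < U" "v < K" "b \<in> B" "I = 3*K*u+v" "J = v+b" "L = 3*K*u+v+2*b" by blast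
    then have "(u,v,b) \<in> T" "(I,J,L) = trip K (u,v,b)" unfolding T_def trip_def by auto
    then show "(I,J,L) \<in> S" unfolding S_def by blast
  qed
  have bK: "b < K" if "b \<in> B" for b using B that by auto
  have inj: "inj_on (trip K) T"
  proof (rule inj_onI)
    fix x y assume "x \<in> T" "y \<in> T" "trip K x = trip K y"
    then obtain u v b u' v' b' where x: "x = (u,v,b)" and y: "y = (u',v',b')" and
      r: "v < K" "v' < K" "b \<in> B" "b' \<in> B" and
      e: "3*K*u+v = 3*K*u'+v'" "v+b = v'+b'" unfolding T_def trip_def by auto
    have "u = u' \<and> v = v'" by (rule divmod_uniq[of v "3*K" v']) (use r e in auto)
    then show "x = y" using x y e by auto
  qed
  have cS: "card S = U*K*card B" unfolding S_def card_image[OF inj] unfolding T_def by (simp add: card_cartesian_product)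
  have sub: "S \<subseteq> {..<N} \<times> {..<M} \<times> {..<N}"
  proof (safe)
    fix I J L assume "(I,J,L) \<in> S"
    then obtain u v b where r: "u < U" "v < K" "b \<in> B" and e: "I = 3*K*u+v" "J = v+b" "L = 3*K*u+v+2*b"
      using mem by auto
    have b: "b < K" using bK r by auto
    have "3*K*(u+1) \<le> 3*K*U" using r(1) by (intro mult_le_mono2) simp
    then have "3*K*u + 3*K \<le> 3*K*U" by (simp add: algebra_simps)
    then show "I < N" "L < N" "J < M" using e r b UK KM by linarith+
  qed
  have ind: "induced S"
    unfolding induced_def
  proof (rule conjI; intro allI impI)
    fix I J L I' J' L'
    assume s1: "(I,J,L) \<in> S" and s2: "(I',J',L') \<in> S" and
      c: "(I = I' \<and> J = J') \<or> (J = J' \<and> L = L') \<or> (L = L' \<and> I = I')"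
    obtain u v b where r: "u < U" "v < K" "b \<in> B" and e: "I = 3*K*u+v" "J = v+b" "L = 3*K*u+v+2*b"
      using s1 mem by blast
    obtain u' v' b' where r': "u' < U" "v' < K" "b' \<in> B" and e': "I' = 3*K*u'+v'" "J' = v'+b'" "L' = 3*K*u'+v'+2*b'"
      using s2 mem by blast
    have bb: "b < K" "b' < K" using bK r r' by auto
    have I_iff: "u = u' \<and> v = v'" if "I = I'"
    proof (rule divmod_uniq[of v "3*K" v' u u'])
      show "v < 3*K" "v' < 3*K" using r r' by linarith+
      show "3*K*u + v = 3*K*u' + v'" using that e e' by simp
    qed
    have L_iff: "u = u' \<and> v+2*b = v'+2*b'" if "L = L'"
    proof (rule divmod_uniq[of "v+2*b" "3*K" "v'+2*b'" u u'])
      show "v+2*b < 3*K" "v'+2*b' < 3*K" using r r' bb by linarith+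
      show "3*K*u + (v+2*b) = 3*K*u' + (v'+2*b')" using that e e' by simp
    qed
    have "u = u' \<and> v = v' \<and> b = b'"
      using c
    proof (elim disjE conjE)
      assume "I = I'" "J = J'" then show ?thesis using I_iff e(2) e'(2) by simp
    next
      assume "J = J'" "L = L'" then show ?thesis using L_iff e(2) e'(2) by simp
    next
      assume "L = L'" "I = I'" then show ?thesis using L_iff I_iff by simp
    qed
    then show "I = I' \<and> J = J' \<and> L = L'" using e e' by simp
  next
    fix I J L L1 I2 J3
    assume s1: "(I,J,L1) \<in> S" and s2: "(I2,J,L) \<in> S" and s3: "(I,J3,L) \<in> S"
    obtain u1 v1 b1 where r1: "u1 < U" "v1 < K" "b1 \<in> B" and e1: "I = 3*K*u1+v1" "J = v1+b1"
      using s1 mem by blast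
    obtain u2 v2 b2 where r2: "u2 < U" "v2 < K" "b2 \<in> B" and e2: "J = v2+b2" "L = 3*K*u2+v2+2*b2"
      using s2 mem by blast
    obtain u3 v3 b3 where r3: "u3 < U" "v3 < K" "b3 \<in> B" and e3: "I = 3*K*u3+v3" "L = 3*K*u3+v3+2*b3"
      using s3 mem by blast
    have bb: "b1 < K" "b2 < K" "b3 < K" using bK r1 r2 r3 by auto
    have h13: "u1 = u3 \<and> v1 = v3"
    proof (rule divmod_uniq[of v1 "3*K" v3 u1 u3])
      show "v1 < 3*K" "v3 < 3*K" using r1 r3 by linarith+
      show "3*K*u1 + v1 = 3*K*u3 + v3" using e1 e3 by simp
    qed
    have h23: "u2 = u3 \<and> v2+2*b2 = v3+2*b3"
    proof (rule divmod_uniq[of "v2+2*b2" "3*K" "v3+2*b3" u2 u3])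
      show "v2+2*b2 < 3*K" "v3+2*b3 < 3*K" using r2 r3 bb by linarith+
      show "3*K*u2 + (v2+2*b2) = 3*K*u3 + (v3+2*b3)" using e2 e3 by simp
    qed
    have sum: "b1 + b2 = 2*b3" using h13 h23 e1(2) e2(1) by linarith
    then have "b1 = b2" using B(2) r1(3) r2(3) r3(3) unfolding ap3free_def by blast
    then have "b3 = b1" using sum by linarith
    then have "I = 3*K*u1+v1 \<and> J = v1+b1 \<and> L = 3*K*u1+v1+2*b1" using e1 e3 h13 by simp
    then show "(I,J,L) \<in> S" using mem r1 by blast
  qed
  show ?thesis using sub ind cS by blast
qed

lemma induced_image:
  assumes "induced S0" "inj_on f A" "inj_on g B" "inj_on h C" "S0 \<subseteq> A \<times> B \<times> C"
  shows "induced ((\<lambda>(a,b,c). (f a, g b, h c)) ` S0) \<and> card ((\<lambda>(a,b,c). (f a, g b, h c)) ` S0) = card S0"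
proof
  let ?F = "(\<lambda>(a,b,c). (f a, g b, h c))"
  have mem: "(I,J,L) \<in> ?F ` S0 \<longleftrightarrow> (\<exists>a b c. (a,b,c) \<in> S0 \<and> I = f a \<and> J = g b \<and> L = h c)" for I J L
  proof
    assume "(I,J,L) \<in> ?F ` S0" then show "\<exists>a b c. (a,b,c) \<in> S0 \<and> I = f a \<and> J = g b \<and> L = h c" by auto
  next
    assume "\<exists>a b c. (a,b,c) \<in> S0 \<and> I = f a \<and> J = g b \<and> L = h c"
    then obtain a b c where "(a,b,c) \<in> S0" "I = f a" "J = g b" "L = h c" by blast
    then show "(I,J,L) \<in> ?F ` S0" by (intro rev_image_eqI[of "(a,b,c)"]) auto
  qed
  have fi: "a = a'" if "a \<in> A" "a' \<in> A" "f a = f a'" for a a' using assms(2) that inj_onD by metis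
  have gi: "a = a'" if "a \<in> B" "a' \<in> B" "g a = g a'" for a a' using assms(3) that inj_onD by metis
  have hi: "a = a'" if "a \<in> C" "a' \<in> C" "h a = h a'" for a a' using assms(4) that inj_onD by metis
  have dom: "a \<in> A" "b \<in> B" "c \<in> C" if "(a,b,c) \<in> S0" for a b c using assms(5) that by auto
  show "induced (?F ` S0)"
    unfolding induced_def
  proof (rule conjI; intro allI impI)
    fix I J L I' J' L'
    assume s1: "(I,J,L) \<in> ?F ` S0" and s2: "(I',J',L') \<in> ?F ` S0" and
      c: "(I = I' \<and> J = J') \<or> (J = J' \<and> L = L') \<or> (L = L' \<and> I = I')"
    obtain a b c where x: "(a,b,c) \<in> S0" "I = f a" "J = g b" "L = h c" using s1 mem by blast
    obtain a' b' c' where x': "(a',b',c') \<in> S0" "I' = f a'" "J' = g b'" "L' = h c'" using s2 mem by blast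
    have "(a = a' \<and> b = b') \<or> (b = b' \<and> c = c') \<or> (c = c' \<and> a = a')"
      using c x x' fi gi hi dom by metis
    then have "a = a' \<and> b = b' \<and> c = c'" using assms(1) x(1) x'(1) unfolding induced_def by blast
    then show "I = I' \<and> J = J' \<and> L = L'" using x x' by simp
  next
    fix I J L L1 I2 J3
    assume s1: "(I,J,L1) \<in> ?F ` S0" and s2: "(I2,J,L) \<in> ?F ` S0" and s3: "(I,J3,L) \<in> ?F ` S0"
    obtain a1 b1 c1 where x1: "(a1,b1,c1) \<in> S0" "I = f a1" "J = g b1" using s1 mem by blast
    obtain a2 b2 c2 where x2: "(a2,b2,c2) \<in> S0" "J = g b2" "L = h c2" using s2 mem by blast
    obtain a3 b3 c3 where x3: "(a3,b3,c3) \<in> S0" "I = f a3" "L = h c3" using s3 mem by blast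
    have "a1 = a3" using fi dom x1 x3 by metis
    moreover have "b1 = b2" using gi dom x1 x2 by metis
    moreover have "c2 = c3" using hi dom x2 x3 by metis
    ultimately have "(a1,b1,c2) \<in> S0" using assms(1) x1(1) x2(1) x3(1) unfolding induced_def by blast
    then show "(I,J,L) \<in> ?F ` S0" using mem x1 x2 by blast
  qed
  have "inj_on ?F S0"
  proof (rule inj_onI)
    fix x y assume xy: "x \<in> S0" "y \<in> S0" "?F x = ?F y"
    obtain a b c where x: "x = (a,b,c)" by (cases x) auto
    obtain a' b' c' where y: "y = (a',b',c')" by (cases y) auto
    have "f a = f a'" "g b = g b'" "h c = h c'" using xy(3) x y by auto
    moreover have "(a,b,c) \<in> S0" "(a',b',c') \<in> S0" using xy x y by auto
    ultimately have "a = a'" "b = b'" "c = c'" using fi gi hi dom by metis+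
    then show "x = y" using x y by simp
  qed
  then show "card (?F ` S0) = card S0" by (rule card_image)
qed

definition LL :: "nat \<Rightarrow> nat \<Rightarrow> nat list set" where
  "LL q n = {xs. set xs \<subseteq> {..<q} \<and> length xs = n}"

lemma LL_card: "card (LL q n) = q^n" "finite (LL q n)"
  unfolding LL_def using card_lists_length_eq[of "{..<q}" n] finite_lists_length_eq[of "{..<q}" n] by auto

lemma to_lists:
  assumes "S0 \<subseteq> {..<q^n} \<times> {..<m^n} \<times> {..<q^n}" "induced S0"
  shows "\<exists>S. S \<subseteq> LL q n \<times> LL m n \<times> LL q n \<and> induced S \<and> card S = card S0"
proof -
  obtain f where f: "bij_betw f {..<q^n} (LL q n)"
    using finite_same_card_bij[of "{..<q^n}" "LL q n"] LL_card by auto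
  obtain g where g: "bij_betw g {..<m^n} (LL m n)"
    using finite_same_card_bij[of "{..<m^n}" "LL m n"] LL_card by auto
  let ?F = "(\<lambda>(a,b,c). (f a, g b, f c))"
  have "induced (?F ` S0) \<and> card (?F ` S0) = card S0"
    by (rule induced_image[OF assms(2) _ _ _ assms(1)]) (use f g in \<open>auto simp: bij_betw_def\<close>)
  moreover have "?F ` S0 \<subseteq> LL q n \<times> LL m n \<times> LL q n"
    using assms(1) f g unfolding bij_betw_def by fastforce
  ultimately show ?thesis by blast
qed

definition Phi :: "nat list \<times> nat list \<times> nat list \<Rightarrow> (nat\<times>nat) list \<times> (nat\<times>nat) list \<times> (nat\<times>nat) list" where
  "Phi = (\<lambda>(I,J,L). (zip I J, zip J L, zip L I))"

lemma zip_inj: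
  assumes "length I = length J" "length I' = length J'" "zip I J = zip I' J'"
  shows "I = I' \<and> J = J'"
proof -
  have "I = map fst (zip I J)" using assms(1) by simp
  also have "\<dots> = map fst (zip I' J')" using assms(3) by simp
  also have "\<dots> = I'" using assms(2) by simp
  finally have 1: "I = I'" .
  have "J = map snd (zip I J)" using assms(1) by simp
  also have "\<dots> = map snd (zip I' J')" using assms(3) by simp
  also have "\<dots> = J'" using assms(2) by simp
  finally show ?thesis using 1 by simp
qed

lemma pow_val:
  assumes "I \<in> LL q n" "J \<in> LL m n" "L \<in> LL q n"
  shows "tensor_pow (mm_tensor q m q) n (zip I J) (zip J L) (zip L I) = (1::'f::field)"
proof -
  have len: "length I = n" "length J = n" "length L = n" using assms by (auto simp: LL_def)
  have "mm_tensor q m q (zip I J ! t) (zip J L ! t) (zip L I ! t) = (1::'f)" if "t < n" for t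
  proof -
    have "I!t \<in> set I" "J!t \<in> set J" "L!t \<in> set L" using that len by simp_all
    then have "I!t < q" "J!t < m" "L!t < q" using assms by (auto simp: LL_def)
    then show ?thesis using that len by (simp add: mm_tensor_def)
  qed
  then show ?thesis using len by (simp add: tensor_pow_def)
qed

lemma pow_nz:
  assumes "tensor_pow (mm_tensor q m q) n xs ys zs \<noteq> (0::'f::field)"
  shows "\<exists>I J L. I \<in> LL q n \<and> J \<in> LL m n \<and> L \<in> LL q n \<and> (xs,ys,zs) = Phi (I,J,L)"
proof -
  have len: "length xs = n" "length ys = n" "length zs = n" using assms by (auto simp: tensor_pow_def split: if_splits)
  have p: "(\<Prod>t<n. mm_tensor q m q (xs!t) (ys!t) (zs!t)) \<noteq> (0::'f)"
    using assms len by (simp add: tensor_pow_def)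
  have nz: "mm_tensor q m q (xs!t) (ys!t) (zs!t) \<noteq> (0::'f)" if "t < n" for t
    using p that by (auto simp: prod_zero_iff)
  have cond: "fst (xs!t) < q \<and> snd (xs!t) < m \<and> fst (zs!t) < q \<and> ys!t = (snd (xs!t), fst (zs!t)) \<and> zs!t = (fst (zs!t), fst (xs!t))"
    if "t < n" for t
    using nz[OF that] by (cases "xs!t"; cases "ys!t"; cases "zs!t") (auto simp: mm_tensor_def split: if_splits)
  define I where "I = map fst xs"
  define J where "J = map snd xs"
  define L where "L = map fst zs"
  have sx: "\<forall>x\<in>set xs. fst x < q \<and> snd x < m"
  proof
    fix x assume "x \<in> set xs"
    then obtain i where "i < length xs" "xs!i = x" by (auto simp: in_set_conv_nth)
    then show "fst x < q \<and> snd x < m" using cond len by auto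
  qed
  have sz: "\<forall>x\<in>set zs. fst x < q"
  proof
    fix x assume "x \<in> set zs"
    then obtain i where "i < length zs" "zs!i = x" by (auto simp: in_set_conv_nth)
    then show "fst x < q" using cond len by auto
  qed
  have "I \<in> LL q n" "J \<in> LL m n" "L \<in> LL q n" unfolding I_def J_def L_def LL_def using len sx sz
    by auto
  moreover have "xs = zip I J" unfolding I_def J_def by (simp add: zip_map_fst_snd)
  moreover have "ys = zip J L" unfolding J_def L_def using len cond by (intro nth_equalityI) auto
  moreover have "zs = zip L I" unfolding I_def L_def using len cond by (intro nth_equalityI) auto
  ultimately show ?thesis unfolding Phi_def by (intro exI[of _ I] exI[of _ J] exI[of _ L]) simp
qed

lemma tensor_part:
  assumes S: "S \<subseteq> LL q n \<times> LL m n \<times> LL q n" and ind: "induced S"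
  shows "\<exists>A :: (nat \<times> nat) list \<Rightarrow> (nat \<times> nat) list \<Rightarrow> (nat \<times> nat) list \<Rightarrow> 'f::field.
       zeroing_out A (tensor_pow (mm_tensor q m q) n) \<and> independent_tensor A \<and>
       card (tensor_support A) = card S"
proof -
  let ?T = "tensor_pow (mm_tensor q m q) n :: (nat \<times> nat) list \<Rightarrow> (nat \<times> nat) list \<Rightarrow> (nat \<times> nat) list \<Rightarrow> 'f"
  define A :: "(nat \<times> nat) list \<Rightarrow> (nat \<times> nat) list \<Rightarrow> (nat \<times> nat) list \<Rightarrow> 'f" where
    "A = (\<lambda>xs ys zs. if (xs,ys,zs) \<in> Phi ` S then 1 else 0)"
  have lenS: "length I = n \<and> length J = n \<and> length L = n" if "(I,J,L) \<in> S" for I J L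
    using S that by (auto simp: LL_def)
  have PhiS: "(I,J,L) \<in> S" if hh: "Phi (I,J,L) \<in> Phi ` S" "length I = n" "length J = n" "length L = n" for I J L
  proof -
    obtain p where p: "p \<in> S" "Phi (I,J,L) = Phi p" using hh(1) unfolding image_def by blast
    obtain I' J' L' where p': "p = (I',J',L')" by (cases p) auto
    have "length I' = n" "length J' = n" "length L' = n" using lenS p p' by auto
    then have "I = I' \<and> J = J'" "J = J' \<and> L = L'" using p(2) p' hh zip_inj[of I J I' J'] zip_inj[of J L J' L'] by (auto simp: Phi_def)
    then show ?thesis using p p' by auto
  qed
  have inj: "inj_on Phi S"
  proof (rule inj_onI)
    fix x y assume xy: "x \<in> S" "y \<in> S" "Phi x = Phi y"
    obtain I J L where x: "x = (I,J,L)" by (cases x) auto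
    obtain I' J' L' where y: "y = (I',J',L')" by (cases y) auto
    have l: "length I = n" "length J = n" "length L = n" "length I' = n" "length J' = n" "length L' = n"
      using lenS xy x y by auto
    have "zip I J = zip I' J'" "zip J L = zip J' L'" using xy(3) x y by (auto simp: Phi_def)
    then have "I = I' \<and> J = J'" "J = J' \<and> L = L'" using zip_inj[of I J I' J'] zip_inj[of J L J' L'] l by auto
    then show "x = y" using x y by simp
  qed
  have supp: "tensor_support A = Phi ` S" unfolding tensor_support_def A_def by auto
  have zo: "zeroing_out A ?T"
    unfolding zeroing_out_def
  proof (intro conjI allI)
    fix xs ys zs
    show "A xs ys zs = ?T xs ys zs \<or> A xs ys zs = 0"
    proof (cases "(xs,ys,zs) \<in> Phi ` S")
      case True
      then obtain I J L where "(I,J,L) \<in> S" "(xs,ys,zs) = Phi (I,J,L)" by auto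
      then show ?thesis using pow_val[of I q n J m L] S unfolding A_def Phi_def by auto
    qed (simp add: A_def)
  next
    define X where "X = (\<lambda>(I,J,L). zip I J) ` S"
    define Y where "Y = (\<lambda>(I,J,L). zip J L) ` S"
    define Z where "Z = (\<lambda>(I,J,L). zip L I) ` S"
    show "\<exists>(a::(nat\<times>nat) list \<Rightarrow> nat) (b::(nat\<times>nat) list \<Rightarrow> nat) (c::(nat\<times>nat) list \<Rightarrow> nat). \<forall>xs ys zs. ?T xs ys zs \<noteq> 0 \<longrightarrow> (A xs ys zs \<noteq> 0 \<longleftrightarrow> a xs + b ys + c zs = 0)"
    proof (rule exI[of _ "\<lambda>xs. if xs \<in> X then 0 else (1::nat)"], rule exI[of _ "\<lambda>ys. if ys \<in> Y then 0 else (1::nat)"],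
        rule exI[of _ "\<lambda>zs. if zs \<in> Z then 0 else (1::nat)"], intro allI impI)
      fix xs ys zs assume "?T xs ys zs \<noteq> 0"
      then obtain I J L where IJL: "I \<in> LL q n" "J \<in> LL m n" "L \<in> LL q n" and e: "(xs,ys,zs) = Phi (I,J,L)"
        using pow_nz by blast
      have len: "length I = n" "length J = n" "length L = n" using IJL by (auto simp: LL_def)
      have e2: "xs = zip I J" "ys = zip J L" "zs = zip L I" using e by (auto simp: Phi_def)
      have hX: "xs \<in> X \<longleftrightarrow> (\<exists>L1. (I,J,L1) \<in> S)"
      proof
        assume "xs \<in> X"
        then obtain I1 J1 L1 where "(I1,J1,L1) \<in> S" "zip I J = zip I1 J1" unfolding X_def e2 by auto
        then show "\<exists>L1. (I,J,L1) \<in> S" using zip_inj[of I J I1 J1] lenS len by metis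
      next
        assume "\<exists>L1. (I,J,L1) \<in> S" then obtain L1 where "(I,J,L1) \<in> S" by blast
        then show "xs \<in> X" unfolding X_def e2 by (intro rev_image_eqI[of "(I,J,L1)"]) auto
      qed
      have hY: "ys \<in> Y \<longleftrightarrow> (\<exists>I2. (I2,J,L) \<in> S)"
      proof
        assume "ys \<in> Y"
        then obtain I1 J1 L1 where "(I1,J1,L1) \<in> S" "zip J L = zip J1 L1" unfolding Y_def e2 by auto
        then show "\<exists>I2. (I2,J,L) \<in> S" using zip_inj[of J L J1 L1] lenS len by metis
      next
        assume "\<exists>I2. (I2,J,L) \<in> S" then obtain I2 where "(I2,J,L) \<in> S" by blast
        then show "ys \<in> Y" unfolding Y_def e2 by (intro rev_image_eqI[of "(I2,J,L)"]) auto
      qed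
      have hZ: "zs \<in> Z \<longleftrightarrow> (\<exists>J3. (I,J3,L) \<in> S)"
      proof
        assume "zs \<in> Z"
        then obtain I1 J1 L1 where "(I1,J1,L1) \<in> S" "zip L I = zip L1 I1" unfolding Z_def e2 by auto
        then show "\<exists>J3. (I,J3,L) \<in> S" using zip_inj[of L I L1 I1] lenS len by metis
      next
        assume "\<exists>J3. (I,J3,L) \<in> S" then obtain J3 where "(I,J3,L) \<in> S" by blast
        then show "zs \<in> Z" unfolding Z_def e2 by (intro rev_image_eqI[of "(I,J3,L)"]) auto
      qed
      have "A xs ys zs \<noteq> 0 \<longleftrightarrow> (I,J,L) \<in> S"
        unfolding A_def e using PhiS len by auto
      also have "\<dots> \<longleftrightarrow> xs \<in> X \<and> ys \<in> Y \<and> zs \<in> Z"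
        unfolding hX hY hZ using ind unfolding induced_def by blast
      also have "\<dots> \<longleftrightarrow> (if xs \<in> X then 0 else 1) + (if ys \<in> Y then 0 else 1) + (if zs \<in> Z then 0 else (1::nat)) = 0"
        by auto
      finally show "A xs ys zs \<noteq> 0 \<longleftrightarrow> (if xs \<in> X then 0 else 1) + (if ys \<in> Y then 0 else 1) + (if zs \<in> Z then 0 else (1::nat)) = 0" .
    qed
  qed
  have it: "independent_tensor A"
    unfolding independent_tensor_def supp
  proof (intro allI impI)
    fix xs ys zs xs' ys' zs'
    assume a1: "(xs,ys,zs) \<in> Phi ` S" and a2: "(xs',ys',zs') \<in> Phi ` S" and ne: "(xs,ys,zs) \<noteq> (xs',ys',zs')"
    obtain I J L where p: "(I,J,L) \<in> S" "(xs,ys,zs) = Phi (I,J,L)" using a1 by auto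
    obtain I' J' L' where p': "(I',J',L') \<in> S" "(xs',ys',zs') = Phi (I',J',L')" using a2 by auto
    have l: "length I = n" "length J = n" "length L = n" "length I' = n" "length J' = n" "length L' = n"
      using lenS p p' by auto
    have nq: "\<not> (I = I' \<and> J = J' \<and> L = L')" using ne p p' by auto
    have ii: "(I = I' \<and> J = J') \<or> (J = J' \<and> L = L') \<or> (L = L' \<and> I = I') \<Longrightarrow> False"
      using ind p(1) p'(1) nq unfolding induced_def by blast
    have x: "xs \<noteq> xs'"
    proof
      assume "xs = xs'" then have "zip I J = zip I' J'" using p p' by (simp add: Phi_def)
      then show False using zip_inj[of I J I' J'] l ii by auto
    qed
    have y: "ys \<noteq> ys'"
    proof
      assume "ys = ys'" then have "zip J L = zip J' L'" using p p' by (simp add: Phi_def)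
      then show False using zip_inj[of J L J' L'] l ii by auto
    qed
    have z: "zs \<noteq> zs'"
    proof
      assume "zs = zs'" then have "zip L I = zip L' I'" using p p' by (simp add: Phi_def)
      then show False using zip_inj[of L I L' I'] l ii by auto
    qed
    show "xs \<noteq> xs' \<and> ys \<noteq> ys' \<and> zs \<noteq> zs'" using x y z by simp
  qed
  have "card (tensor_support A) = card S" unfolding supp by (rule card_image[OF inj])
  then show ?thesis using zo it by blast
qed

definition achiev :: "nat \<Rightarrow> nat \<Rightarrow> nat \<Rightarrow> nat \<Rightarrow> bool" where
  "achiev q m n k \<longleftrightarrow> (\<exists>S. S \<subseteq> LL q n \<times> LL m n \<times> LL q n \<and> induced S \<and> card S = k)"

lemma achiev_1: "q > 0 \<Longrightarrow> m > 0 \<Longrightarrow> achiev q m n 1"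
proof -
  assume "q > 0" "m > 0"
  let ?S = "{(replicate n 0, replicate n 0, replicate n 0)}"
  have "?S \<subseteq> LL q n \<times> LL m n \<times> LL q n" using \<open>q > 0\<close> \<open>m > 0\<close> by (auto simp: LL_def)
  moreover have "induced ?S" unfolding induced_def by auto
  ultimately show ?thesis unfolding achiev_def by (intro exI[of _ ?S]) auto
qed

lemma achiev_bound: "achiev q m n k \<Longrightarrow> k \<le> card (LL q n \<times> LL m n \<times> LL q n)"
proof -
  assume "achiev q m n k"
  then obtain S where S: "S \<subseteq> LL q n \<times> LL m n \<times> LL q n" "card S = k" unfolding achiev_def by blast
  have "finite (LL q n \<times> LL m n \<times> LL q n)" using LL_card(2) by (intro finite_cartesian_product) auto
  then show ?thesis using card_mono[OF _ S(1)] S(2) by simp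
qed

lemma achiev_big:
  assumes "B \<subseteq> {..<K}" "ap3free B" "3*K*U \<le> q^n" "2*K \<le> m^n"
  shows "achiev q m n (U*K*card B)"
proof -
  obtain S0 where "S0 \<subseteq> {..<q^n} \<times> {..<m^n} \<times> {..<q^n}" "induced S0" "card S0 = U*K*card B"
    using int_construction[OF assms] by blast
  then show ?thesis unfolding achiev_def using to_lists by metis
qed

lemma eventually_big:
  assumes q2: "q \<ge> 2" and m2: "m \<ge> 2" and mq: "real m = real q powr \<epsilon>" and e: "0 < \<epsilon>" "\<epsilon> \<le> 1" and C: "C > 0"
  shows "eventually (\<lambda>n. \<exists>k. achiev q m n k \<and> real q powr ((1+\<epsilon>) * real n - C * real n) \<le> real k) at_top"
proof -
  define \<delta> where "\<delta> = min (C/2) (1/2)"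
  have d: "\<delta> > 0" "\<delta> \<le> C/2" "\<delta> \<le> 1/2" using C unfolding \<delta>_def by auto
  obtain K0 where K0: "\<And>K. K \<ge> K0 \<Longrightarrow> \<exists>B \<subseteq> {..<K}. ap3free B \<and> real K powr (1-\<delta>) \<le> real (card B)"
    using behrend_delta[OF d(1)] by blast
  have ev: "eventually (\<lambda>n. n \<ge> 6*K0 + 6 \<and> real n \<ge> 12 / C) at_top"
  proof (rule eventually_mono[OF eventually_ge_at_top[of "max (6*K0+6) (nat \<lceil>12/C\<rceil>)"]])
    fix n assume "max (6*K0+6) (nat \<lceil>12/C\<rceil>) \<le> n"
    then have "6*K0+6 \<le> n" "nat \<lceil>12/C\<rceil> \<le> n" by auto
    moreover have "12/C \<le> real (nat \<lceil>12/C\<rceil>)" by linarith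
    ultimately show "n \<ge> 6*K0 + 6 \<and> real n \<ge> 12 / C" by linarith
  qed
  show ?thesis
  proof (rule eventually_mono[OF ev], elim conjE)
    fix n assume n1: "n \<ge> 6*K0 + 6" and n2: "real n \<ge> 12 / C"
    have "n < 2^n" by (rule less_exp)
    also have "\<dots> \<le> m^n" using m2 by (intro power_mono) auto
    finally have mn: "m^n > n" .
    have mqn: "m^n \<le> q^n"
    proof -
      have "real q powr \<epsilon> \<le> real q powr 1" using e q2 by (intro powr_mono) auto
      then have "real m \<le> real q" using mq q2 by simp
      then show ?thesis by (intro power_mono) auto
    qed
    define K where "K = m^n div 3"
    have K3: "3*K \<le> m^n" unfolding K_def by simp
    have Kmod: "m^n = 3*K + m^n mod 3" unfolding K_def by simp
    have "m^n mod 3 < 3" by simp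
    have KK0: "K \<ge> K0" using Kmod mn n1 \<open>m^n mod 3 < 3\<close> by linarith
    have K1: "K \<ge> 1" using Kmod mn n1 \<open>m^n mod 3 < 3\<close> by linarith
    have K6: "m^n \<le> 6*K" using Kmod K1 \<open>m^n mod 3 < 3\<close> by linarith
    define U where "U = q^n div (3*K)"
    have U3: "U*(3*K) \<le> q^n" unfolding U_def by (rule div_times_less_eq_dividend)
    have Umod: "q^n = U*(3*K) + q^n mod (3*K)" unfolding U_def by (rule div_mult_mod_eq[symmetric])
    have "q^n mod (3*K) < 3*K" using K1 by simp
    have U1: "U \<ge> 1"
    proof (rule ccontr)
      assume "\<not> U \<ge> 1" then have "U = 0" by simp
      then have "q^n < 3*K" using Umod \<open>q^n mod (3*K) < 3*K\<close> by simp
      then show False using K3 mqn by linarith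
    qed
    have U6: "q^n \<le> 6*(U*K)"
    proof -
      have "q^n < U*(3*K) + 3*K" using Umod \<open>q^n mod (3*K) < 3*K\<close> by linarith
      also have "\<dots> \<le> U*(3*K) + U*(3*K)" using U1 by simp
      finally show ?thesis by (simp add: mult.commute)
    qed
    obtain B where B: "B \<subseteq> {..<K}" "ap3free B" "real K powr (1-\<delta>) \<le> real (card B)" using K0[OF KK0] by blast
    have ach: "achiev q m n (U*K*card B)"
      by (rule achiev_big[OF B(1,2)]) (use U3 K3 mqn in \<open>auto simp: mult.commute\<close>)
    define x where "x = real (m^n)"
    have x: "x = real q powr (\<epsilon> * real n)" unfolding x_def using mq q2
      by (simp add: powr_powr powr_realpow[symmetric] mult.commute)
    have qn: "real (q^n) = real q powr real n" using q2 by (simp add: powr_realpow)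
    have xpos: "x > 0" unfolding x_def using m2 by simp
    have Kx: "real K \<ge> x/6" unfolding x_def using K6 by linarith
    have "(x/6) powr (1-\<delta>) \<le> real K powr (1-\<delta>)" using Kx xpos d by (intro powr_mono2) auto
    moreover have "(x/6) powr (1-\<delta>) = x powr (1-\<delta>) / 6 powr (1-\<delta>)" by (rule powr_divide)
    moreover have "6 powr (1-\<delta>) \<le> (6::real) powr 1" using d by (intro powr_mono) auto
    moreover have "x powr (1-\<delta>) > 0" using xpos by simp
    moreover have "6 powr (1-\<delta>) > (0::real)" by simp
    ultimately have "x powr (1-\<delta>) / 6 \<le> x powr (1-\<delta>) / 6 powr (1-\<delta>)"
      by (intro divide_left_mono) auto
    then have Bx: "x powr (1-\<delta>) / 6 \<le> real (card B)" using B(3) \<open>(x/6) powr (1-\<delta>) \<le> real K powr (1-\<delta>)\<close>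
      \<open>(x/6) powr (1-\<delta>) = x powr (1-\<delta>) / 6 powr (1-\<delta>)\<close> by linarith
    have "real (q^n) \<le> real (6*(U*K))" using U6 by (simp only: of_nat_le_iff)
    then have UKq: "real (U*K) \<ge> real q powr real n / 6" unfolding qn by simp
    have "real q powr real n / 6 * (x powr (1-\<delta>) / 6) \<le> real (U*K) * real (card B)"
      using UKq Bx by (intro mult_mono) auto
    also have "\<dots> = real (U*K*card B)" by simp
    finally have L1: "real q powr (real n + \<epsilon> * real n * (1-\<delta>)) / 36 \<le> real (U*K*card B)"
      unfolding x by (simp add: powr_powr powr_add)
    have ex: "real n + \<epsilon> * real n * (1-\<delta>) = ((1+\<epsilon>) * real n - C * real n) + (C * real n - \<epsilon> * real n * \<delta>)"
      by (simp add: algebra_simps)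
    have "\<epsilon> * real n * \<delta> \<le> 1 * real n * (C/2)" using e d by (intro mult_mono) auto
    then have ge6: "C * real n - \<epsilon> * real n * \<delta> \<ge> 6" using n2 C by (simp add: field_simps)
    have "(36::real) \<le> 2 powr 6" by simp
    also have "\<dots> \<le> real q powr 6" using q2 by (intro powr_mono2) auto
    also have "\<dots> \<le> real q powr (C * real n - \<epsilon> * real n * \<delta>)" using q2 ge6 by (intro powr_mono) auto
    finally have b36: "36 \<le> real q powr (C * real n - \<epsilon> * real n * \<delta>)" .
    have "real q powr ((1+\<epsilon>) * real n - C * real n) * 36 \<le> real q powr ((1+\<epsilon>) * real n - C * real n) * real q powr (C * real n - \<epsilon> * real n * \<delta>)"
      using b36 by (intro mult_left_mono) auto
    also have "\<dots> = real q powr (((1+\<epsilon>) * real n - C * real n) + (C * real n - \<epsilon> * real n * \<delta>))"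
      by (rule powr_add[symmetric])
    also have "\<dots> = real q powr (real n + \<epsilon> * real n * (1-\<delta>))" unfolding ex ..
    finally have "real q powr ((1+\<epsilon>) * real n - C * real n) \<le> real (U*K*card B)" using L1 by simp
    then show "\<exists>k. achiev q m n k \<and> real q powr ((1+\<epsilon>) * real n - C * real n) \<le> real k" using ach by blast
  qed
qed

theorem mainTheorem3:
  fixes q m :: nat and \<epsilon> :: real
  assumes "q > 0" and "0 < \<epsilon>" and "\<epsilon> \<le> 1"
    and "real m = real q powr \<epsilon>"
  shows "\<exists>g :: nat \<Rightarrow> real. g \<in> o(\<lambda>n. real n) \<and>
    (\<forall>n > 0. \<exists>A :: (nat \<times> nat) list \<Rightarrow> (nat \<times> nat) list \<Rightarrow> (nat \<times> nat) list \<Rightarrow> 'f::field.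
       zeroing_out A (tensor_pow (mm_tensor q m q) n) \<and> independent_tensor A \<and>
       real (card (tensor_support A)) \<ge> real q powr ((1 + \<epsilon>) * real n - g n))"
proof -
  have "real m > 0" unfolding assms(4) using assms(1) by simp
  then have mpos: "m > 0" by simp
  define c where "c n = (GREATEST k. achiev q m n k)" for n
  have c_ach: "achiev q m n (c n)" for n unfolding c_def
    by (rule GreatestI_nat[where P="achiev q m n", OF achiev_1[OF assms(1) mpos]]) (rule achiev_bound)
  have c_ge: "k \<le> c n" if "achiev q m n k" for n k unfolding c_def
    by (rule Greatest_le_nat[where P="achiev q m n", OF that]) (rule achiev_bound)
  have c1: "c n \<ge> 1" for n using c_ge achiev_1[OF assms(1) mpos] by blast
  have fin: "\<exists>A :: (nat \<times> nat) list \<Rightarrow> (nat \<times> nat) list \<Rightarrow> (nat \<times> nat) list \<Rightarrow> 'f::field.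
       zeroing_out A (tensor_pow (mm_tensor q m q) n) \<and> independent_tensor A \<and>
       real (card (tensor_support A)) \<ge> real q powr ((1 + \<epsilon>) * real n - g n)"
    if "\<And>n. real q powr ((1 + \<epsilon>) * real n - g n) \<le> real (c n)" for g n
  proof -
    obtain S where S: "S \<subseteq> LL q n \<times> LL m n \<times> LL q n" "induced S" "card S = c n"
      using c_ach[of n] unfolding achiev_def by blast
    obtain A :: "(nat \<times> nat) list \<Rightarrow> (nat \<times> nat) list \<Rightarrow> (nat \<times> nat) list \<Rightarrow> 'f::field"
      where A: "zeroing_out A (tensor_pow (mm_tensor q m q) n)" "independent_tensor A" "card (tensor_support A) = card S"
      using tensor_part[OF S(1,2)] by blast
    show ?thesis using A S(3) that[of n] by (intro exI[of _ A]) auto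
  qed
  show ?thesis
  proof (cases "q = 1")
    case True
    have "(\<lambda>n. 0::real) \<in> o(\<lambda>n. real n)" by (intro landau_o.smallI) auto
    moreover have "real q powr ((1 + \<epsilon>) * real n - 0) \<le> real (c n)" for n using True c1[of n] by simp
    ultimately show ?thesis using fin[of "\<lambda>n. 0"] by blast
  next
    case False
    then have q2: "q \<ge> 2" using assms(1) by simp
    have "real q powr \<epsilon> > real q powr 0" using q2 assms(2) by (intro powr_less_mono) auto
    then have m2: "m \<ge> 2" using assms(4) q2 by simp
    define g where "g n = max 0 ((1+\<epsilon>) * real n - log (real q) (real (c n)))" for n
    have bnd: "real q powr ((1 + \<epsilon>) * real n - g n) \<le> real (c n)" for n
    proof -
      have "(1 + \<epsilon>) * real n - g n \<le> log (real q) (real (c n))" unfolding g_def by simp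
      then have "real q powr ((1 + \<epsilon>) * real n - g n) \<le> real q powr (log (real q) (real (c n)))"
        using q2 by (intro powr_mono) auto
      also have "\<dots> = real (c n)" using q2 c1[of n] by simp
      finally show ?thesis .
    qed
    have "g \<in> o(\<lambda>n. real n)"
    proof (rule landau_o.smallI)
      fix C :: real assume C: "C > 0"
      show "eventually (\<lambda>n. norm (g n) \<le> C * norm (real n)) at_top"
      proof (rule eventually_mono[OF eventually_big[OF q2 m2 assms(4) assms(2) assms(3) C]])
        fix n assume "\<exists>k. achiev q m n k \<and> real q powr ((1+\<epsilon>) * real n - C * real n) \<le> real k"
        then obtain k where k: "achiev q m n k" "real q powr ((1+\<epsilon>) * real n - C * real n) \<le> real k" by blast
        have "real q powr ((1+\<epsilon>) * real n - C * real n) \<le> real (c n)" using k c_ge[OF k(1)] by linarith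
        then have "log (real q) (real q powr ((1+\<epsilon>) * real n - C * real n)) \<le> log (real q) (real (c n))"
          using q2 c1[of n] by (subst log_le_cancel_iff) auto
        then have "(1+\<epsilon>) * real n - C * real n \<le> log (real q) (real (c n))" using q2 by simp
        then have "g n \<le> C * real n" "g n \<ge> 0" unfolding g_def using C by auto
        then show "norm (g n) \<le> C * norm (real n)" by simp
      qed
    qed
    then show ?thesis using fin[of g] bnd by blast
  qed
qed

end
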